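(* Let $d,T,\tau\ge1$ be integers and $\beta\in(0,1)$, and assume $2T\tau/\beta\ge e$ and $\tau/\beta\ge e$. Let $\sigma>0$ satisfy $$\sigma\sqrt{2\log\tfrac{2T\tau}{\beta}}\le\tfrac12,\qquad 5\sigma^2 d\log\tfrac{2T\tau}{\beta}\le\frac{1}{\log\frac{2T\tau}{\beta}},\qquad 5\sigma^2 d\log\tfrac{T\tau}{\beta}\le1 .$$ Let $a_1,\dots,a_n\in\mathbb{R}^d$ be nonzero vectors. Consider the random process $x^{(1)}=0\in\mathbb{R}^d$, $\lambda^{(1)}=0\in\mathbb{R}^n$, and for $t=1,\dots,T-1$: - $S^{(t)}=\{i:\langle\overline{a}_i,x^{(t)}\rangle\le0\}$ and $m^{(t)}=|S^{(t)}|$, where we assume $m^{(t)}\ge1$; - $u^{(t)}=\frac{1}{m^{(t)}}\sum_{i\in S^{(t)}}\overline{a}_i$; - $x^{(t+1)}=x^{(t)}+u^{(t)}+\eta^{(t)}$, where $\eta^{(t)}\sim N(0,\sigma^2I_d)$ are independent; - $\lambda^{(t+1)}_i=\lambda^{(t)}_i+\frac{1}{m^{(t)}}$ for $i\in S^{(t)}$, and $\lambda^{(t+1)}_i=\lambda^{(t)}_i$ otherwise. Let $\overline{\lambda}=\lambda^{(T)}/T$. Then with probability at least $1-\frac{3\beta}{\tau}$, $$\Big\|\sum_{i=1}^n\overline{\lambda}_i\overline{a}_i\Big\|_2\le\frac{11}{\sqrt{T}}.$$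
   Context: For a nonzero vector $a$, $\overline{a}=a/\|a\|_2$. $N(0,\sigma^2 I_d)$ is the centered Gaussian distribution on $\mathbb{R}^d$ with covariance $\sigma^2 I_d$. $\log$ is the natural logarithm. *)

theory Defs
  imports "HOL-Probability.Probability"
begin

definition abar :: "'a::real_normed_vector \<Rightarrow> 'a" where
  "abar v = (1 / norm v) *\<^sub>R v"

definition gaussian_vec :: "real \<Rightarrow> (real ^ 'd) measure" where
  "gaussian_vec s = density lborel
     (\<lambda>x. ennreal ((2 * pi * s\<^sup>2) powr (- real CARD('d) / 2)
                    * exp (- (norm x)\<^sup>2 / (2 * s\<^sup>2))))"

definition actS :: "(nat \<Rightarrow> real ^ 'd) \<Rightarrow> nat \<Rightarrow> real ^ 'd \<Rightarrow> nat set" where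
  "actS a n x = {i \<in> {1..n}. abar (a i) \<bullet> x \<le> 0}"

definition upd :: "(nat \<Rightarrow> real ^ 'd) \<Rightarrow> nat \<Rightarrow> real ^ 'd \<Rightarrow> real ^ 'd" where
  "upd a n x = (1 / real (card (actS a n x))) *\<^sub>R (\<Sum>i\<in>actS a n x. abar (a i))"

text \<open>Iterates, shifted by one: xit a n eta k = x^(k+1); the noise eta t is eta^(t).\<close>
primrec xit :: "(nat \<Rightarrow> real ^ 'd) \<Rightarrow> nat \<Rightarrow> (nat \<Rightarrow> real ^ 'd) \<Rightarrow> nat \<Rightarrow> real ^ 'd" where
  "xit a n eta 0 = 0"
| "xit a n eta (Suc k) = xit a n eta k + upd a n (xit a n eta k) + eta (Suc k)"

text \<open>Weights, shifted by one: lamit a n eta k = lambda^(k+1).\<close>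
primrec lamit :: "(nat \<Rightarrow> real ^ 'd) \<Rightarrow> nat \<Rightarrow> (nat \<Rightarrow> real ^ 'd) \<Rightarrow> nat \<Rightarrow> nat \<Rightarrow> real" where
  "lamit a n eta 0 = (\<lambda>i. 0)"
| "lamit a n eta (Suc k) = (\<lambda>i. lamit a n eta k i +
      (if i \<in> actS a n (xit a n eta k)
       then 1 / real (card (actS a n (xit a n eta k))) else 0))"

end

theory Submission
  imports Defs
begin

lemma gauss_alg:
  fixes v c y t :: real
  assumes v: "v > 0" and Q: "1 - 2 * v * c > 0"
  shows "- t\<^sup>2 / (2 * v) + c * (y + t)\<^sup>2
     = -(t - 2 * v * c * y / (1 - 2 * v * c))\<^sup>2 / (2 * (v / (1 - 2 * v * c))) + c * y\<^sup>2 / (1 - 2 * v * c)"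
proof -
  define Q where "Q = 1 - 2 * v * c"
  have Q0: "Q \<noteq> 0" using Q Q_def by simp
  have c: "c = (1 - Q) / (2 * v)" using v Q_def by (simp add: field_simps)
  show ?thesis unfolding Q_def[symmetric] unfolding c using v Q0
    by (simp add: field_simps power2_eq_square)
qed


lemma gauss1d:
  fixes \<sigma> c y :: real
  assumes s: "\<sigma> > 0" and c: "c \<ge> 0" and q: "2 * \<sigma>\<^sup>2 * c < 1"
  shows "(\<integral>\<^sup>+t. ennreal (1 / sqrt (2 * pi * \<sigma>\<^sup>2) * exp (- t\<^sup>2 / (2 * \<sigma>\<^sup>2)) * exp (c * (y + t)\<^sup>2)) \<partial>lborel)
       = ennreal (1 / sqrt (1 - 2 * \<sigma>\<^sup>2 * c) * exp (c * y\<^sup>2 / (1 - 2 * \<sigma>\<^sup>2 * c)))"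
proof -
  define Q where "Q = 1 - 2 * \<sigma>\<^sup>2 * c"
  have Q: "Q > 0" using q by (simp add: Q_def)
  define s' where "s' = sqrt (\<sigma>\<^sup>2 / Q)"
  define m where "m = 2 * \<sigma>\<^sup>2 * c * y / Q"
  define K where "K = 1 / sqrt Q * exp (c * y\<^sup>2 / Q)"
  have s'p: "s' > 0" using Q s by (simp add: s'_def)
  have s'2: "s'\<^sup>2 = \<sigma>\<^sup>2 / Q" using Q by (simp add: s'_def)
  have pw: "1 / sqrt (2 * pi * \<sigma>\<^sup>2) * exp (- t\<^sup>2 / (2 * \<sigma>\<^sup>2)) * exp (c * (y + t)\<^sup>2)
      = K * normal_density m s' t" for t
  proof -
    have e: "- t\<^sup>2 / (2 * \<sigma>\<^sup>2) + c * (y + t)\<^sup>2 = -(t - m)\<^sup>2 / (2 * s'\<^sup>2) + c * y\<^sup>2 / Q"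
      unfolding s'2 m_def Q_def by (rule gauss_alg) (use Q s Q_def in auto)
    have r: "1 / sqrt (2 * pi * \<sigma>\<^sup>2) = 1 / sqrt Q * (1 / sqrt (2 * pi * s'\<^sup>2))"
    proof -
      have "sqrt (2 * pi * s'\<^sup>2) = sqrt (2 * pi * \<sigma>\<^sup>2) / sqrt Q"
        unfolding s'2 by (simp add: real_sqrt_divide)
      moreover have "sqrt Q > 0" using Q by simp
      ultimately show ?thesis by simp
    qed
    have "exp (- t\<^sup>2 / (2 * \<sigma>\<^sup>2)) * exp (c * (y + t)\<^sup>2) = exp (c * y\<^sup>2 / Q) * exp (-(t - m)\<^sup>2 / (2 * s'\<^sup>2))"
      unfolding mult_exp_exp e by (simp add: add.commute)
    note h = this
    show ?thesis unfolding normal_density_def K_def r unfolding mult.assoc h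
      by (rule arg_cong[where f="\<lambda>z. _ * z"]) (rule mult.left_commute)
  qed
  have "(\<integral>\<^sup>+t. ennreal (K * normal_density m s' t) \<partial>lborel) = ennreal K * (\<integral>\<^sup>+t. ennreal (normal_density m s' t) \<partial>lborel)"
    using Q by (subst ennreal_mult) (auto simp: K_def intro!: nn_integral_cmult)
  also have "(\<integral>\<^sup>+t. ennreal (normal_density m s' t) \<partial>lborel) = 1"
    using prob_space.emeasure_space_1[OF prob_space_normal_density[of s' m]]
    using s'p by (simp add: emeasure_density)
  finally show ?thesis unfolding pw K_def Q_def by simp
qed


lemma powr_half_conv:
  fixes z :: real assumes z: "z > 0"
  shows "z powr (- real n / 2) = (1 / sqrt z) ^ n"
proof -
  have "z powr (- real n / 2) = (z powr (- 1 / 2)) powr real n"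
    by (simp add: powr_powr)
  also have "\<dots> = (z powr (- 1 / 2)) ^ n" using z by (simp add: powr_realpow)
  also have "z powr (- 1 / 2) = 1 / sqrt z"
    using z by (simp add: powr_minus_divide powr_half_sqrt)
  finally show ?thesis .
qed

lemma gauss_vec_mgf:
  fixes y :: "real ^ 'd" and \<sigma> c :: real
  assumes s: "\<sigma> > 0" and c: "c \<ge> 0" and q: "2 * \<sigma>\<^sup>2 * c < 1"
  shows "(\<integral>\<^sup>+x. ennreal (exp (c * (norm (y + x))\<^sup>2)) \<partial>(gaussian_vec \<sigma> :: (real ^ 'd) measure))
     = ennreal ((1 / sqrt (1 - 2 * \<sigma>\<^sup>2 * c)) ^ CARD('d) * exp (c * (norm y)\<^sup>2 / (1 - 2 * \<sigma>\<^sup>2 * c)))"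
proof -
  define Q where "Q = 1 - 2 * \<sigma>\<^sup>2 * c"
  have Q: "Q > 0" using q by (simp add: Q_def)
  define g where "g = (\<lambda>yb t. 1 / sqrt (2 * pi * \<sigma>\<^sup>2) * exp (- t\<^sup>2 / (2 * \<sigma>\<^sup>2)) * exp (c * (yb + t)\<^sup>2))"
  have gnn: "0 \<le> g yb t" for yb t unfolding g_def by simp
  have sq: "(norm v)\<^sup>2 = (\<Sum>b\<in>Basis. (v \<bullet> b)\<^sup>2)" for v :: "real ^ 'd"
    unfolding power2_norm_eq_inner by (subst euclidean_inner) (simp add: power2_eq_square)
  have cardB: "card (Basis :: (real ^ 'd) set) = CARD('d)"
    by simp
  have pw: "ennreal ((2 * pi * \<sigma>\<^sup>2) powr (- real CARD('d) / 2) * exp (- (norm x)\<^sup>2 / (2 * \<sigma>\<^sup>2)))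
      * ennreal (exp (c * (norm (y + x))\<^sup>2)) = (\<Prod>b\<in>Basis. ennreal (g (y \<bullet> b) (x \<bullet> b)))" for x :: "real ^ 'd"
  proof -
    have A: "(2 * pi * \<sigma>\<^sup>2) powr (- real CARD('d) / 2) = (\<Prod>b\<in>(Basis :: (real ^ 'd) set). 1 / sqrt (2 * pi * \<sigma>\<^sup>2))"
      using s powr_half_conv[of "2 * pi * \<sigma>\<^sup>2" "CARD('d)"] by simp
    have B: "exp (- (norm x)\<^sup>2 / (2 * \<sigma>\<^sup>2)) = (\<Prod>b\<in>Basis. exp (- (x \<bullet> b)\<^sup>2 / (2 * \<sigma>\<^sup>2)))"
      unfolding sq by (simp add: exp_sum[symmetric] sum_negf sum_divide_distrib)
    have C: "exp (c * (norm (y + x))\<^sup>2) = (\<Prod>b\<in>Basis. exp (c * (y \<bullet> b + x \<bullet> b)\<^sup>2))"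
      unfolding sq by (simp add: exp_sum[symmetric] sum_distrib_left inner_add_left)
    have "(2 * pi * \<sigma>\<^sup>2) powr (- real CARD('d) / 2) * exp (- (norm x)\<^sup>2 / (2 * \<sigma>\<^sup>2))
      * exp (c * (norm (y + x))\<^sup>2) = (\<Prod>b\<in>Basis. g (y \<bullet> b) (x \<bullet> b))"
      unfolding A B C g_def prod.distrib ..
    then show ?thesis
      by (simp add: ennreal_mult[symmetric] prod_ennreal gnn)
  qed
  have "(\<integral>\<^sup>+x. ennreal (exp (c * (norm (y + x))\<^sup>2)) \<partial>(gaussian_vec \<sigma> :: (real ^ 'd) measure))
      = (\<integral>\<^sup>+x. (\<Prod>b\<in>Basis. ennreal (g (y \<bullet> b) (x \<bullet> b))) \<partial>lborel)"
    unfolding gaussian_vec_def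
    by (subst nn_integral_density) (measurable, simp only: pw)
  also have "\<dots> = (\<Prod>b\<in>(Basis :: (real ^ 'd) set). (\<integral>\<^sup>+t. ennreal (g (y \<bullet> b) t) \<partial>lborel))"
    by (rule nn_integral_lborel_prod) (auto simp: g_def)
  also have "\<dots> = (\<Prod>b\<in>(Basis :: (real ^ 'd) set). ennreal (1 / sqrt Q * exp (c * (y \<bullet> b)\<^sup>2 / Q)))"
    unfolding g_def Q_def by (intro prod.cong refl gauss1d s c q)
  also have "\<dots> = ennreal (\<Prod>b\<in>(Basis :: (real ^ 'd) set). 1 / sqrt Q * exp (c * (y \<bullet> b)\<^sup>2 / Q))"
    by (rule prod_ennreal) (use Q in simp)
  also have "(\<Prod>b\<in>(Basis :: (real ^ 'd) set). 1 / sqrt Q * exp (c * (y \<bullet> b)\<^sup>2 / Q))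
      = (1 / sqrt Q) ^ CARD('d) * exp (c * (norm y)\<^sup>2 / Q)"
    unfolding sq sum_distrib_left sum_divide_distrib exp_sum[OF finite_Basis] prod.distrib by simp
  finally show ?thesis unfolding Q_def .
qed


primrec zit :: "(real ^ 'd \<Rightarrow> real ^ 'd) \<Rightarrow> (nat \<Rightarrow> real ^ 'd) \<Rightarrow> nat \<Rightarrow> real ^ 'd" where
  "zit G eta 0 = 0"
| "zit G eta (Suc k) = G (zit G eta k) + eta (Suc k)"

lemma prob_space_gaussian_vec:
  assumes s: "\<sigma> > 0"
  shows "prob_space (gaussian_vec \<sigma> :: (real ^ 'd) measure)"
proof
  have "(\<integral>\<^sup>+x. ennreal (exp (0 * (norm (0 + x))\<^sup>2)) \<partial>(gaussian_vec \<sigma> :: (real ^ 'd) measure))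
     = ennreal ((1 / sqrt (1 - 2 * \<sigma>\<^sup>2 * 0)) ^ CARD('d) * exp (0 * (norm (0::real^'d))\<^sup>2 / (1 - 2 * \<sigma>\<^sup>2 * 0)))"
    by (rule gauss_vec_mgf) (use s in auto)
  then show "emeasure (gaussian_vec \<sigma> :: (real ^ 'd) measure) (space (gaussian_vec \<sigma>)) = 1"
    by (simp add: nn_integral_const)
qed

lemma product_prob_space_gaussian_vec:
  assumes s: "\<sigma> > 0"
  shows "product_prob_space (\<lambda>_::nat. gaussian_vec \<sigma> :: (real ^ 'd) measure)"
  by (rule product_prob_spaceI) (rule prob_space_gaussian_vec[OF s])

lemma zit_cong:
  "(\<And>j. j \<in> {1..k} \<Longrightarrow> eta j = eta' j) \<Longrightarrow> zit G eta k = zit G eta' k"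
  by (induction k) auto

lemma space_gaussian_vec[simp]: "space (gaussian_vec \<sigma>) = UNIV"
  by (simp add: gaussian_vec_def)

lemma sets_gaussian_vec[simp]: "sets (gaussian_vec \<sigma>) = sets borel"
  by (simp add: gaussian_vec_def)

lemma zit_measurable:
  assumes G[measurable]: "G \<in> borel_measurable borel"
  shows "k \<le> K \<Longrightarrow> (\<lambda>eta. zit G eta k) \<in> borel_measurable (PiM {1..K} (\<lambda>_. gaussian_vec \<sigma>))"
proof (induction k)
  case 0 then show ?case by simp
next
  case (Suc k)
  have "(\<lambda>eta. eta (Suc k)) \<in> measurable (PiM {1..K} (\<lambda>_. gaussian_vec \<sigma>)) (gaussian_vec \<sigma>)"
    using Suc.prems by (intro measurable_component_singleton) auto
  then have m1: "(\<lambda>eta. eta (Suc k)) \<in> borel_measurable (PiM {1..K} (\<lambda>_. gaussian_vec \<sigma>))"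
    by (simp add: measurable_def)
  have m2: "(\<lambda>eta. G (zit G eta k)) \<in> borel_measurable (PiM {1..K} (\<lambda>_. gaussian_vec \<sigma>))"
    using Suc by (intro measurable_compose[OF _ G]) auto
  have "(\<lambda>eta. G (zit G eta k) + eta (Suc k)) \<in> borel_measurable (PiM {1..K} (\<lambda>_. gaussian_vec \<sigma>))" by (rule borel_measurable_add[OF m2 m1])
  then show ?case by simp
qed


lemma zit_step_alg:
  fixes s c :: real and k d :: nat
  assumes s: "s > 0" and c: "c \<ge> 0" and Q: "1 - 2 * s * c * real (Suc k) > 0"
  defines "q \<equiv> 1 - 2 * s * c"
  shows "(1 / sqrt q) ^ d * exp (c / q) *
         ((1 / sqrt (1 - 2 * s * (c / q) * real k)) ^ d * exp (real k * (c / q) / (1 - 2 * s * (c / q) * real k)))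
       \<le> (1 / sqrt (1 - 2 * s * c * real (Suc k))) ^ d * exp (real (Suc k) * c / (1 - 2 * s * c * real (Suc k)))"
proof -
  define R where "R = 1 - 2 * s * c * real (Suc k)"
  have R: "R > 0" using Q R_def by simp
  have "c \<le> c * real (Suc k)" using c by (simp add: mult_le_cancel_left1)
  then have "s * c \<le> s * (c * real (Suc k))" using s by (intro mult_left_mono) auto
  then have Rq: "R \<le> q" unfolding R_def q_def by (simp add: algebra_simps)
  have q: "q > 0" using R Rq by simp
  have e1: "1 - 2 * s * (c / q) * real k = R / q"
    using q unfolding R_def q_def by (simp add: field_simps)
  have e2: "(1 / sqrt q) ^ d * (1 / sqrt (R / q)) ^ d = (1 / sqrt R) ^ d"
    using q R by (simp add: power_mult_distrib[symmetric] real_sqrt_divide)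
  have e3: "real k * (c / q) / (R / q) = real k * c / R"
    using q R by (simp add: field_simps)
  have e4: "c / q \<le> c / R" using c q R Rq by (simp add: frac_le)
  have "exp (c / q) * exp (real k * c / R) \<le> exp (real (Suc k) * c / R)"
    using e4 unfolding mult_exp_exp by (simp add: add_divide_distrib distrib_right)
  then have "(1 / sqrt R) ^ d * (exp (c / q) * exp (real k * c / R)) \<le> (1 / sqrt R) ^ d * exp (real (Suc k) * c / R)"
    using R by (intro mult_left_mono) auto
  then show ?thesis unfolding e1 e3 R_def[symmetric] using e2
    by (simp add: mult_ac)
qed


lemma zit_mgf:
  fixes G :: "real ^ 'd \<Rightarrow> real ^ 'd" and \<sigma> :: real
  assumes s: "\<sigma> > 0" and G[measurable]: "G \<in> borel_measurable borel"
    and Gb: "\<And>y. (norm (G y))\<^sup>2 \<le> (norm y)\<^sup>2 + 1"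
  shows "0 \<le> c \<Longrightarrow> 2 * \<sigma>\<^sup>2 * c * real k < 1 \<Longrightarrow>
    (\<integral>\<^sup>+eta. ennreal (exp (c * (norm (zit G eta k))\<^sup>2)) \<partial>PiM {1..k} (\<lambda>_. gaussian_vec \<sigma> :: (real ^ 'd) measure))
    \<le> ennreal ((1 / sqrt (1 - 2 * \<sigma>\<^sup>2 * c * real k)) ^ CARD('d) * exp (real k * c / (1 - 2 * \<sigma>\<^sup>2 * c * real k)))"
proof (induction k arbitrary: c)
  case 0
  then show ?case by (simp add: PiM_empty nn_integral_count_space_finite)
next
  case (Suc k)
  interpret product_prob_space "\<lambda>_::nat. gaussian_vec \<sigma> :: (real ^ 'd) measure"
    by (rule product_prob_space_gaussian_vec[OF s])
  define q where "q = 1 - 2 * \<sigma>\<^sup>2 * c"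
  define c' where "c' = c / q"
  define d where "d = CARD('d)"
  have c: "c \<ge> 0" using Suc.prems by simp
  have R: "1 - 2 * \<sigma>\<^sup>2 * c * real (Suc k) > 0" using Suc.prems by simp
  have "c \<le> c * real (Suc k)" using c by (simp add: mult_le_cancel_left1)
  then have "\<sigma>\<^sup>2 * c \<le> \<sigma>\<^sup>2 * (c * real (Suc k))" by (intro mult_left_mono) auto
  then have q: "q > 0" using R unfolding q_def by (simp add: algebra_simps)
  have q1: "2 * \<sigma>\<^sup>2 * c < 1" using q q_def by simp
  have c': "c' \<ge> 0" using c q by (simp add: c'_def)
  have "1 - 2 * \<sigma>\<^sup>2 * c' * real k = (1 - 2 * \<sigma>\<^sup>2 * c * real (Suc k)) / q"
    using q unfolding c'_def q_def by (simp add: field_simps)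
  then have c'k: "2 * \<sigma>\<^sup>2 * c' * real k < 1" using R q
    by (metis diff_gt_0_iff_gt divide_pos_pos)
  have meas: "(\<lambda>eta. ennreal (exp (c * (norm (zit G eta (Suc k)))\<^sup>2)))
      \<in> borel_measurable (PiM {1..Suc k} (\<lambda>_. gaussian_vec \<sigma> :: (real ^ 'd) measure))"
    using zit_measurable[OF G, of "Suc k" "Suc k" \<sigma>] by measurable
  have ins: "{1..Suc k} = insert (Suc k) {1..k}" by auto
  have "(\<integral>\<^sup>+eta. ennreal (exp (c * (norm (zit G eta (Suc k)))\<^sup>2)) \<partial>PiM {1..Suc k} (\<lambda>_. gaussian_vec \<sigma> :: (real ^ 'd) measure))
     = (\<integral>\<^sup>+x. (\<integral>\<^sup>+y. ennreal (exp (c * (norm (zit G (x(Suc k := y)) (Suc k)))\<^sup>2)) \<partial>gaussian_vec \<sigma>) \<partial>PiM {1..k} (\<lambda>_. gaussian_vec \<sigma>))"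
    using meas unfolding ins by (intro product_nn_integral_insert) auto
  also have "\<dots> \<le> (\<integral>\<^sup>+x. ennreal ((1 / sqrt q) ^ d * exp (c / q)) * ennreal (exp (c' * (norm (zit G x k))\<^sup>2)) \<partial>PiM {1..k} (\<lambda>_. gaussian_vec \<sigma>))"
  proof (rule nn_integral_mono)
    fix x assume x: "x \<in> space (PiM {1..k} (\<lambda>_. gaussian_vec \<sigma> :: (real ^ 'd) measure))"
    have zx: "zit G (x(Suc k := y)) (Suc k) = G (zit G x k) + y" for y
    proof -
      have "zit G (x(Suc k := y)) k = zit G x k" by (rule zit_cong) auto
      then show ?thesis by simp
    qed
    have "(\<integral>\<^sup>+y. ennreal (exp (c * (norm (zit G (x(Suc k := y)) (Suc k)))\<^sup>2)) \<partial>(gaussian_vec \<sigma> :: (real ^ 'd) measure))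
       = ennreal ((1 / sqrt q) ^ d * exp (c * (norm (G (zit G x k)))\<^sup>2 / q))"
      unfolding zx q_def d_def by (rule gauss_vec_mgf[OF s c q1])
    also have "\<dots> \<le> ennreal ((1 / sqrt q) ^ d * exp (c / q) * exp (c' * (norm (zit G x k))\<^sup>2))"
    proof -
      have "c * (norm (G (zit G x k)))\<^sup>2 \<le> c * ((norm (zit G x k))\<^sup>2 + 1)"
        using c Gb by (intro mult_left_mono) auto
      then have "c * (norm (G (zit G x k)))\<^sup>2 / q \<le> c / q + c' * (norm (zit G x k))\<^sup>2"
        using q unfolding c'_def by (simp add: divide_right_mono field_simps)
      then have "exp (c * (norm (G (zit G x k)))\<^sup>2 / q) \<le> exp (c / q) * exp (c' * (norm (zit G x k))\<^sup>2)"
        by (simp add: mult_exp_exp)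
      then show ?thesis using q
        by (intro ennreal_leI) (simp add: mult.assoc mult_left_mono)
    qed
    finally show "(\<integral>\<^sup>+y. ennreal (exp (c * (norm (zit G (x(Suc k := y)) (Suc k)))\<^sup>2)) \<partial>(gaussian_vec \<sigma> :: (real ^ 'd) measure))
       \<le> ennreal ((1 / sqrt q) ^ d * exp (c / q)) * ennreal (exp (c' * (norm (zit G x k))\<^sup>2))"
      using q by (simp add: ennreal_mult[symmetric])
  qed
  also have "\<dots> = ennreal ((1 / sqrt q) ^ d * exp (c / q)) * (\<integral>\<^sup>+x. ennreal (exp (c' * (norm (zit G x k))\<^sup>2)) \<partial>PiM {1..k} (\<lambda>_. gaussian_vec \<sigma>))"
    using zit_measurable[OF G order_refl, of k \<sigma>] by (intro nn_integral_cmult) measurable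
  also have "\<dots> \<le> ennreal ((1 / sqrt q) ^ d * exp (c / q)) *
      ennreal ((1 / sqrt (1 - 2 * \<sigma>\<^sup>2 * c' * real k)) ^ CARD('d) * exp (real k * c' / (1 - 2 * \<sigma>\<^sup>2 * c' * real k)))"
    by (intro mult_left_mono Suc.IH c' c'k) auto
  also have "\<dots> = ennreal ((1 / sqrt q) ^ d * exp (c / q) *
      ((1 / sqrt (1 - 2 * \<sigma>\<^sup>2 * c' * real k)) ^ CARD('d) * exp (real k * c' / (1 - 2 * \<sigma>\<^sup>2 * c' * real k))))"
  proof (rule ennreal_mult[symmetric])
    show "0 \<le> (1 / sqrt q) ^ d * exp (c / q)" using q by simp
    show "0 \<le> (1 / sqrt (1 - 2 * \<sigma>\<^sup>2 * c' * real k)) ^ CARD('d) * exp (real k * c' / (1 - 2 * \<sigma>\<^sup>2 * c' * real k))"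
      using c'k by simp
  qed
  also have "\<dots> \<le> ennreal ((1 / sqrt (1 - 2 * \<sigma>\<^sup>2 * c * real (Suc k))) ^ CARD('d) * exp (real (Suc k) * c / (1 - 2 * \<sigma>\<^sup>2 * c * real (Suc k))))"
    unfolding c'_def q_def d_def using zit_step_alg[of "\<sigma>\<^sup>2" c k "CARD('d)"] s c R
    by (intro ennreal_leI) simp
  finally show ?case .
qed


lemma zit_tail:
  fixes G :: "real ^ 'd \<Rightarrow> real ^ 'd" and \<sigma> :: real
  assumes s: "\<sigma> > 0" and G[measurable]: "G \<in> borel_measurable borel"
    and Gb: "\<And>y. (norm (G y))\<^sup>2 \<le> (norm y)\<^sup>2 + 1"
    and c: "0 \<le> c" and ck: "2 * \<sigma>\<^sup>2 * c * real k < 1"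
  shows "emeasure (PiM {1..k} (\<lambda>_. gaussian_vec \<sigma> :: (real ^ 'd) measure))
      {eta \<in> space (PiM {1..k} (\<lambda>_. gaussian_vec \<sigma> :: (real ^ 'd) measure)). R < (norm (zit G eta k))\<^sup>2}
    \<le> ennreal (exp (- c * R) * ((1 / sqrt (1 - 2 * \<sigma>\<^sup>2 * c * real k)) ^ CARD('d) * exp (real k * c / (1 - 2 * \<sigma>\<^sup>2 * c * real k))))"
proof -
  let ?P = "PiM {1..k} (\<lambda>_. gaussian_vec \<sigma> :: (real ^ 'd) measure)"
  let ?E = "{eta \<in> space ?P. R < (norm (zit G eta k))\<^sup>2}"
  have zm[measurable]: "(\<lambda>eta. zit G eta k) \<in> borel_measurable ?P"
    using zit_measurable[OF G order_refl, of k \<sigma>] .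
  have Em: "?E \<in> sets ?P" by measurable
  have "emeasure ?P ?E = (\<integral>\<^sup>+eta. indicator ?E eta \<partial>?P)"
    using Em by simp
  also have "\<dots> \<le> (\<integral>\<^sup>+eta. ennreal (exp (- c * R)) * ennreal (exp (c * (norm (zit G eta k))\<^sup>2)) \<partial>?P)"
  proof (rule nn_integral_mono)
    fix eta assume "eta \<in> space ?P"
    show "indicator ?E eta \<le> ennreal (exp (- c * R)) * ennreal (exp (c * (norm (zit G eta k))\<^sup>2))"
    proof (cases "eta \<in> ?E")
      case True
      then have "c * R \<le> c * (norm (zit G eta k))\<^sup>2" using c by (intro mult_left_mono) auto
      then have "1 \<le> exp (- c * R) * exp (c * (norm (zit G eta k))\<^sup>2)"
        by (simp add: mult_exp_exp)
      then show ?thesis using True by (simp add: ennreal_mult[symmetric])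
    qed simp
  qed
  also have "\<dots> = ennreal (exp (- c * R)) * (\<integral>\<^sup>+eta. ennreal (exp (c * (norm (zit G eta k))\<^sup>2)) \<partial>?P)"
    by (rule nn_integral_cmult) measurable
  also have "\<dots> \<le> ennreal (exp (- c * R)) * ennreal ((1 / sqrt (1 - 2 * \<sigma>\<^sup>2 * c * real k)) ^ CARD('d) * exp (real k * c / (1 - 2 * \<sigma>\<^sup>2 * c * real k)))"
    by (intro mult_left_mono zit_mgf[OF s G Gb c ck]) auto
  also have "\<dots> = ennreal (exp (- c * R) * ((1 / sqrt (1 - 2 * \<sigma>\<^sup>2 * c * real k)) ^ CARD('d) * exp (real k * c / (1 - 2 * \<sigma>\<^sup>2 * c * real k))))"
    using ck by (subst ennreal_mult) auto
  finally show ?thesis .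
qed

lemma num_bound:
  fixes x L :: real and d :: nat
  assumes x0: "0 \<le> x" and x1: "x \<le> 2/5" and xd: "x * real d \<le> 2/5" and L: "L \<ge> 1" and kc: "kc \<le> L" and kc0: "0 \<le> kc"
  shows "exp (- 4 * L) * ((1 / sqrt (1 - x)) ^ d * exp (kc / (1 - x))) \<le> exp (- L)"
proof -
  have ox: "1 - x > 0" using x1 by simp
  have "ln (1 / (1 - x)) \<le> 1 / (1 - x) - 1" using ox by (intro ln_le_minus_one) simp
  also have "\<dots> = x / (1 - x)" using ox by (simp add: field_simps)
  also have "\<dots> \<le> x / (3/5)" using ox x0 x1 by (intro divide_left_mono) auto
  also have "x / (3/5) = 5 * x / 3" by simp
  finally have lnb: "ln (1 / (1 - x)) \<le> 5 * x / 3" .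
  have "1 / (1 - x) = exp (ln (1 / (1 - x)))" using ox by simp
  also have "\<dots> \<le> exp (5 * x / 3)" using lnb by simp
  finally have "1 / (1 - x) \<le> exp (5 * x / 3)" .
  then have "sqrt (1 / (1 - x)) \<le> sqrt (exp (5 * x / 3))" by simp
  also have "sqrt (exp (5 * x / 3)) = exp (5 * x / 6)"
    by (simp add: real_sqrt_eq_iff exp_double[symmetric] real_sqrt_unique)
  finally have "(1 / sqrt (1 - x)) ^ d \<le> exp (5 * x / 6) ^ d"
    using x1 by (intro power_mono) (auto simp: real_sqrt_divide)
  also have "\<dots> = exp (5 * x * real d / 6)" by (simp add: exp_of_nat_mult[symmetric] mult_ac)
  also have "\<dots> \<le> exp (1/3)" using xd by simp
  finally have A: "(1 / sqrt (1 - x)) ^ d \<le> exp (1/3)" .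
  have "kc / (1 - x) \<le> L / (3/5)" using kc kc0 ox x1 L by (intro frac_le) auto
  then have B: "exp (kc / (1 - x)) \<le> exp (5 * L / 3)" by simp
  have "(1 / sqrt (1 - x)) ^ d * exp (kc / (1 - x)) \<le> exp (1/3) * exp (5 * L / 3)"
    using A B by (intro mult_mono) auto
  then have "exp (- 4 * L) * ((1 / sqrt (1 - x)) ^ d * exp (kc / (1 - x))) \<le> exp (- 4 * L) * (exp (1/3) * exp (5 * L / 3))"
    by (intro mult_left_mono) auto
  also have "\<dots> = exp (1/3 - 7 * L / 3)" unfolding mult_exp_exp by (rule arg_cong[where f=exp]) (simp add: field_simps)
  also have "\<dots> \<le> exp (- L)" using L by simp
  finally show ?thesis .
qed


lemma norm_abar_le: "norm (abar v) \<le> 1"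
  unfolding abar_def by (cases "v = 0") auto

lemma upd_bound:
  fixes a :: "nat \<Rightarrow> real ^ 'd"
  shows "(norm (x + upd a n x))\<^sup>2 \<le> (norm x)\<^sup>2 + 1"
proof -
  define S where "S = actS a n x"
  define u where "u = upd a n x"
  have fS: "finite S" unfolding S_def actS_def by simp
  have xu: "x \<bullet> u \<le> 0"
  proof -
    have "x \<bullet> u = (1 / real (card S)) * (\<Sum>i\<in>S. x \<bullet> abar (a i))"
      unfolding u_def upd_def S_def by (simp add: inner_sum_right)
    also have "\<dots> \<le> 0"
      by (intro mult_nonneg_nonpos sum_nonpos) (auto simp: S_def actS_def inner_commute)
    finally show ?thesis .
  qed
  have nu: "norm u \<le> 1"
  proof (cases "card S = 0")
    case True then show ?thesis unfolding u_def upd_def S_def[symmetric] by simp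
  next
    case False
    have "norm u = (1 / real (card S)) * norm (\<Sum>i\<in>S. abar (a i))"
      unfolding u_def upd_def S_def by simp
    also have "\<dots> \<le> (1 / real (card S)) * (\<Sum>i\<in>S. norm (abar (a i)))"
      by (intro mult_left_mono norm_sum) auto
    also have "\<dots> \<le> (1 / real (card S)) * (\<Sum>i\<in>S. 1)"
      by (intro mult_left_mono sum_mono norm_abar_le) auto
    also have "\<dots> = 1" using False by simp
    finally show ?thesis .
  qed
  have "(norm (x + u))\<^sup>2 = (norm x)\<^sup>2 + 2 * (x \<bullet> u) + (norm u)\<^sup>2"
    unfolding power2_norm_eq_inner by (simp add: inner_add inner_commute)
  also have "\<dots> \<le> (norm x)\<^sup>2 + 1"
  proof -
    have "(norm u)\<^sup>2 \<le> 1" using nu by (simp add: power_le_one)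
    then show ?thesis using xu by simp
  qed
  finally show ?thesis unfolding u_def .
qed

lemma upd_alt:
  fixes a :: "nat \<Rightarrow> real ^ 'd"
  shows "upd a n x = (1 / (\<Sum>i\<in>{1..n}. if abar (a i) \<bullet> x \<le> 0 then 1 else 0)) *\<^sub>R
      (\<Sum>i\<in>{1..n}. if abar (a i) \<bullet> x \<le> 0 then abar (a i) else 0)"
proof -
  have "real (card (actS a n x)) = (\<Sum>i\<in>actS a n x. 1)" by simp
  also have "\<dots> = (\<Sum>i\<in>{1..n}. if abar (a i) \<bullet> x \<le> 0 then 1 else 0)"
    unfolding actS_def by (subst sum.inter_filter) auto
  finally have c: "real (card (actS a n x)) = (\<Sum>i\<in>{1..n}. if abar (a i) \<bullet> x \<le> 0 then 1 else 0)" .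
  have s: "(\<Sum>i\<in>actS a n x. abar (a i)) = (\<Sum>i\<in>{1..n}. if abar (a i) \<bullet> x \<le> 0 then abar (a i) else 0)"
    unfolding actS_def by (subst sum.inter_filter) auto
  show ?thesis unfolding upd_def c s ..
qed

lemma upd_measurable[measurable]:
  fixes a :: "nat \<Rightarrow> real ^ 'd"
  shows "(\<lambda>x. x + upd a n x) \<in> borel_measurable borel"
  unfolding upd_alt by measurable

lemma xit_zit: "xit a n eta k = zit (\<lambda>x. x + upd a n x) eta k"
  by (induction k) auto

lemma upd_weights:
  fixes a :: "nat \<Rightarrow> real ^ 'd"
  shows "(\<Sum>i=1..n. (if i \<in> actS a n x then 1 / real (card (actS a n x)) else 0) *\<^sub>R abar (a i)) = upd a n x"
proof -
  have sub: "actS a n x \<subseteq> {1..n}" unfolding actS_def by auto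
  have "(\<Sum>i=1..n. (if i \<in> actS a n x then 1 / real (card (actS a n x)) else 0) *\<^sub>R abar (a i))
      = (\<Sum>i=1..n. if i \<in> actS a n x then (1 / real (card (actS a n x))) *\<^sub>R abar (a i) else 0)"
    by (intro sum.cong) auto
  also have "\<dots> = (\<Sum>i\<in>actS a n x. (1 / real (card (actS a n x))) *\<^sub>R abar (a i))"
    using sub by (subst sum.If_cases) (auto simp: Int_absorb1)
  also have "\<dots> = upd a n x" unfolding upd_def by (simp add: scaleR_sum_right)
  finally show ?thesis .
qed

lemma lam_identity:
  fixes a :: "nat \<Rightarrow> real ^ 'd"
  shows "(\<Sum>i=1..n. lamit a n eta k i *\<^sub>R abar (a i)) = xit a n eta k - zit id eta k"
proof (induction k)
  case 0 then show ?case by simp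
next
  case (Suc k)
  have "(\<Sum>i=1..n. lamit a n eta (Suc k) i *\<^sub>R abar (a i))
     = (\<Sum>i=1..n. lamit a n eta k i *\<^sub>R abar (a i))
       + (\<Sum>i=1..n. (if i \<in> actS a n (xit a n eta k) then 1 / real (card (actS a n (xit a n eta k))) else 0) *\<^sub>R abar (a i))"
    by (simp add: scaleR_add_left sum.distrib)
  also have "\<dots> = xit a n eta k - zit id eta k + upd a n (xit a n eta k)"
    unfolding Suc upd_weights ..
  finally show ?case by (simp add: id_def)
qed


lemma card_actS_real:
  fixes a :: "nat \<Rightarrow> real ^ 'd"
  shows "real (card (actS a n x)) = (\<Sum>i\<in>{1..n}. if abar (a i) \<bullet> x \<le> 0 then 1 else 0)"
proof -
  have "real (card (actS a n x)) = (\<Sum>i\<in>actS a n x. 1)" by simp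
  also have "\<dots> = (\<Sum>i\<in>{1..n}. if abar (a i) \<bullet> x \<le> 0 then 1 else 0)"
    unfolding actS_def by (subst sum.inter_filter) auto
  finally show ?thesis .
qed

lemma tail_final:
  fixes G :: "real ^ 'd \<Rightarrow> real ^ 'd" and \<sigma> L :: real and T :: nat
  assumes s: "\<sigma> > 0" and G[measurable]: "G \<in> borel_measurable borel"
    and Gb: "\<And>y. (norm (G y))\<^sup>2 \<le> (norm y)\<^sup>2 + 1"
    and T: "T \<ge> 1" and L: "L \<ge> 1"
    and sL: "5 * \<sigma>\<^sup>2 * real CARD('d) * L * L \<le> 1"
  shows "measure (PiM {1..T-1} (\<lambda>_. gaussian_vec \<sigma> :: (real ^ 'd) measure))
      {eta \<in> space (PiM {1..T-1} (\<lambda>_. gaussian_vec \<sigma> :: (real ^ 'd) measure)). 4 * real T < (norm (zit G eta (T-1)))\<^sup>2}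
    \<le> exp (- L)"
proof -
  define k where "k = T - 1"
  define c where "c = L / real T"
  define x where "x = 2 * \<sigma>\<^sup>2 * c * real k"
  define d where "d = CARD('d)"
  have Tp: "real T > 0" using T by simp
  have kT: "real k \<le> real T" unfolding k_def by simp
  have c0: "c \<ge> 0" using L Tp by (simp add: c_def)
  have x0: "x \<ge> 0" unfolding x_def using c0 by simp
  have kc: "real k * c \<le> L" unfolding c_def using kT L Tp by (simp add: field_simps)
  have kc0: "0 \<le> real k * c" using c0 by simp
  have "x \<le> 2 * \<sigma>\<^sup>2 * L"
  proof -
    have "c * real k \<le> L" using kc by (simp add: mult.commute)
    then show ?thesis unfolding x_def by (simp add: mult.assoc mult_left_mono)
  qed
  then have "x * real d \<le> 2 * \<sigma>\<^sup>2 * L * real d" by (intro mult_right_mono) auto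
  also have "\<dots> \<le> 2 / 5"
  proof -
    have "5 * (\<sigma>\<^sup>2 * real d * L) * L \<le> 1" using sL by (simp add: d_def mult_ac)
    then have "\<sigma>\<^sup>2 * real d * L \<le> 1 / (5 * L)" using L by (simp add: field_simps)
    also have "\<dots> \<le> 1 / 5" using L by (simp add: field_simps)
    finally show ?thesis by (simp add: mult_ac)
  qed
  finally have xd: "x * real d \<le> 2 / 5" .
  have d1: "real d \<ge> 1" unfolding d_def by simp
  have "x * 1 \<le> x * real d" using d1 x0 by (rule mult_left_mono)
  then have x1: "x \<le> 2 / 5" using xd by simp
  have ck: "2 * \<sigma>\<^sup>2 * c * real k < 1" using x1 unfolding x_def by linarith
  have em: "emeasure (PiM {1..k} (\<lambda>_. gaussian_vec \<sigma> :: (real ^ 'd) measure))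
      {eta \<in> space (PiM {1..k} (\<lambda>_. gaussian_vec \<sigma> :: (real ^ 'd) measure)). 4 * real T < (norm (zit G eta k))\<^sup>2}
    \<le> ennreal (exp (- c * (4 * real T)) * ((1 / sqrt (1 - x)) ^ d * exp (real k * c / (1 - x))))"
    unfolding x_def d_def by (rule zit_tail[OF s G Gb c0 ck])
  have e: "exp (- c * (4 * real T)) = exp (- 4 * L)" unfolding c_def using Tp by simp
  have "exp (- c * (4 * real T)) * ((1 / sqrt (1 - x)) ^ d * exp (real k * c / (1 - x))) \<le> exp (- L)"
    unfolding e by (rule num_bound[OF x0 x1 xd L kc kc0])
  then have em2: "emeasure (PiM {1..k} (\<lambda>_. gaussian_vec \<sigma> :: (real ^ 'd) measure))
      {eta \<in> space (PiM {1..k} (\<lambda>_. gaussian_vec \<sigma> :: (real ^ 'd) measure)). 4 * real T < (norm (zit G eta k))\<^sup>2}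
    \<le> ennreal (exp (- L))" using em by (meson ennreal_leI order_trans)
  have "enn2real (emeasure (PiM {1..k} (\<lambda>_. gaussian_vec \<sigma> :: (real ^ 'd) measure))
      {eta \<in> space (PiM {1..k} (\<lambda>_. gaussian_vec \<sigma> :: (real ^ 'd) measure)). 4 * real T < (norm (zit G eta k))\<^sup>2})
     \<le> enn2real (ennreal (exp (- L)))" by (rule enn2real_mono[OF em2]) simp
  then show ?thesis unfolding k_def[symmetric] measure_def by simp
qed


theorem claim3p13:
  fixes a :: "nat \<Rightarrow> real ^ 'd" and n T \<tau> :: nat and \<beta> \<sigma> :: real
  assumes "T \<ge> 1" and "\<tau> \<ge> 1"
    and "0 < \<beta>" and "\<beta> < 1"
    and "2 * real T * real \<tau> / \<beta> \<ge> exp 1"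
    and "real \<tau> / \<beta> \<ge> exp 1"
    and "\<sigma> > 0"
    and "\<sigma> * sqrt (2 * ln (2 * real T * real \<tau> / \<beta>)) \<le> 1 / 2"
    and "5 * \<sigma>\<^sup>2 * real CARD('d) * ln (2 * real T * real \<tau> / \<beta>)
           \<le> 1 / ln (2 * real T * real \<tau> / \<beta>)"
    and "5 * \<sigma>\<^sup>2 * real CARD('d) * ln (real T * real \<tau> / \<beta>) \<le> 1"
    and "\<forall>i\<in>{1..n}. a i \<noteq> 0"
  shows "measure (PiM {1..T-1} (\<lambda>_. gaussian_vec \<sigma> :: (real ^ 'd) measure))
           {eta \<in> space (PiM {1..T-1} (\<lambda>_. gaussian_vec \<sigma> :: (real ^ 'd) measure)).
              (\<forall>k < T - 1. card (actS a n (xit a n eta k)) \<ge> 1) \<longrightarrow>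
              norm (\<Sum>i=1..n. (lamit a n eta (T - 1) i / real T) *\<^sub>R abar (a i))
                \<le> 11 / sqrt (real T)}
         \<ge> 1 - 3 * \<beta> / real \<tau>"
proof -
  note T = assms(1) and tau = assms(2) and b0 = assms(3) and s = assms(7) and hL = assms(5) and h9 = assms(9)
  define P where "P = PiM {1..T-1} (\<lambda>_. gaussian_vec \<sigma> :: (real ^ 'd) measure)"
  define L where "L = ln (2 * real T * real \<tau> / \<beta>)"
  define G1 where "G1 = (\<lambda>x::real^'d. x + upd a n x)"
  interpret P: prob_space P unfolding P_def
    by (intro prob_space_PiM prob_space_gaussian_vec s)
  have Tp: "real T > 0" using T by simp
  have pos: "2 * real T * real \<tau> / \<beta> > 0" using Tp tau b0 by simp
  have eL: "exp L = 2 * real T * real \<tau> / \<beta>" unfolding L_def using pos by simp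
  have L1: "L \<ge> 1" using hL unfolding eL[symmetric] by simp
  have sL: "5 * \<sigma>\<^sup>2 * real CARD('d) * L * L \<le> 1"
    using h9 L1 unfolding L_def[symmetric] by (simp add: field_simps)
  have G1m[measurable]: "G1 \<in> borel_measurable borel" unfolding G1_def by measurable
  have G1b: "(norm (G1 y))\<^sup>2 \<le> (norm y)\<^sup>2 + 1" for y unfolding G1_def by (rule upd_bound)
  have idm[measurable]: "(id :: real^'d \<Rightarrow> _) \<in> borel_measurable borel" by simp
  have idb: "(norm (id y))\<^sup>2 \<le> (norm y)\<^sup>2 + 1" for y :: "real^'d" by simp
  define E1 where "E1 = {eta \<in> space P. 4 * real T < (norm (zit G1 eta (T-1)))\<^sup>2}"
  define E2 where "E2 = {eta \<in> space P. 4 * real T < (norm (zit id eta (T-1)))\<^sup>2}"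
  have z1m[measurable]: "(\<lambda>eta. zit G1 eta k) \<in> borel_measurable P" if "k \<le> T - 1" for k
    unfolding P_def using zit_measurable[OF G1m that] .
  have z2m[measurable]: "(\<lambda>eta. zit id eta k) \<in> borel_measurable P" if "k \<le> T - 1" for k
    unfolding P_def using zit_measurable[OF idm that] .
  have E1m: "E1 \<in> sets P" unfolding E1_def using z1m[of "T-1"] by measurable
  have E2m: "E2 \<in> sets P" unfolding E2_def using z2m[of "T-1"] by measurable
  have mE1: "measure P E1 \<le> exp (- L)" unfolding E1_def P_def
    by (rule tail_final[OF s G1m G1b T L1 sL])
  have mE2: "measure P E2 \<le> exp (- L)" unfolding E2_def P_def
    by (rule tail_final[OF s idm idb T L1 sL])
  have eL2: "exp (- L) = \<beta> / (2 * real T * real \<tau>)" using eL by (simp add: exp_minus)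
  have "exp (- L) \<le> \<beta> / real \<tau>" unfolding eL2 using b0 tau T
    by (intro divide_left_mono) auto
  then have "measure P (E1 \<union> E2) \<le> 2 * (\<beta> / real \<tau>)"
    using measure_Un_le[OF E1m E2m] mE1 mE2 by linarith
  also have "\<dots> \<le> 3 * (\<beta> / real \<tau>)" using b0 tau by (intro mult_right_mono) auto
  finally have mU: "measure P (E1 \<union> E2) \<le> 3 * \<beta> / real \<tau>" by simp
  define A where "A = {eta \<in> space P.
              (\<forall>k < T - 1. card (actS a n (xit a n eta k)) \<ge> 1) \<longrightarrow>
              norm (\<Sum>i=1..n. (lamit a n eta (T - 1) i / real T) *\<^sub>R abar (a i))
                \<le> 11 / sqrt (real T)}"
  have sumeq: "(\<Sum>i=1..n. (lamit a n eta (T - 1) i / real T) *\<^sub>R abar (a i))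
      = (1 / real T) *\<^sub>R (zit G1 eta (T-1) - zit id eta (T-1))" for eta
  proof -
    have "(\<Sum>i=1..n. (lamit a n eta (T - 1) i / real T) *\<^sub>R abar (a i))
        = (1 / real T) *\<^sub>R (\<Sum>i=1..n. lamit a n eta (T - 1) i *\<^sub>R abar (a i))"
      by (simp add: scaleR_sum_right)
    then show ?thesis unfolding lam_identity xit_zit G1_def by simp
  qed
  have Aeq: "A = {eta \<in> space P.
              (\<forall>k\<in>{..<T - 1}. 1 \<le> (\<Sum>i\<in>{1..n}. if abar (a i) \<bullet> zit G1 eta k \<le> 0 then 1 else (0::real))) \<longrightarrow>
              norm ((1 / real T) *\<^sub>R (zit G1 eta (T-1) - zit id eta (T-1))) \<le> 11 / sqrt (real T)}"
    unfolding A_def sumeq card_actS_real[symmetric] xit_zit G1_def by auto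
  have Am: "A \<in> sets P"
  proof -
    have p1: "Measurable.pred P (\<lambda>eta. \<forall>k\<in>{..<T - 1}. 1 \<le> (\<Sum>i\<in>{1..n}. if abar (a i) \<bullet> zit G1 eta k \<le> 0 then 1 else (0::real)))"
    proof (rule pred_intros_finite)
      fix k assume "k \<in> {..<T-1}"
      then have [measurable]: "(\<lambda>eta. zit G1 eta k) \<in> borel_measurable P" by (intro z1m) auto
      show "Measurable.pred P (\<lambda>eta. 1 \<le> (\<Sum>i\<in>{1..n}. if abar (a i) \<bullet> zit G1 eta k \<le> 0 then 1 else (0::real)))"
        by measurable
    qed simp
    have [measurable]: "(\<lambda>eta. zit G1 eta (T-1)) \<in> borel_measurable P" by (intro z1m) auto
    have [measurable]: "(\<lambda>eta. zit id eta (T-1)) \<in> borel_measurable P" by (intro z2m) auto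
    show ?thesis unfolding Aeq using p1 by measurable
  qed
  have sub: "space P - (E1 \<union> E2) \<subseteq> A"
  proof
    fix eta assume e: "eta \<in> space P - (E1 \<union> E2)"
    have n1: "norm (zit G1 eta (T-1)) \<le> 2 * sqrt (real T)"
    proof -
      have "(norm (zit G1 eta (T-1)))\<^sup>2 \<le> 4 * real T" using e unfolding E1_def by auto
      then have "norm (zit G1 eta (T-1)) \<le> sqrt (4 * real T)" by (simp add: real_le_rsqrt)
      then show ?thesis by (simp add: real_sqrt_mult)
    qed
    have n2: "norm (zit id eta (T-1)) \<le> 2 * sqrt (real T)"
    proof -
      have "(norm (zit id eta (T-1)))\<^sup>2 \<le> 4 * real T" using e unfolding E2_def by auto
      then have "norm (zit id eta (T-1)) \<le> sqrt (4 * real T)" by (simp add: real_le_rsqrt)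
      then show ?thesis by (simp add: real_sqrt_mult)
    qed
    have "norm ((1 / real T) *\<^sub>R (zit G1 eta (T-1) - zit id eta (T-1)))
        = (1 / real T) * norm (zit G1 eta (T-1) - zit id eta (T-1))" by simp
    also have "\<dots> \<le> (1 / real T) * (4 * sqrt (real T))"
      using norm_triangle_ineq4[of "zit G1 eta (T-1)" "zit id eta (T-1)"] n1 n2 Tp
      by (intro mult_left_mono) auto
    also have "\<dots> = 4 / sqrt (real T)"
      using Tp by (simp add: field_simps)
    also have "\<dots> \<le> 11 / sqrt (real T)" using Tp by (simp add: divide_right_mono)
    finally show "eta \<in> A" unfolding Aeq using e by auto
  qed
  have "1 - 3 * \<beta> / real \<tau> \<le> 1 - measure P (E1 \<union> E2)" using mU by simp
  also have "\<dots> = measure P (space P - (E1 \<union> E2))"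
    using P.prob_compl[of "E1 \<union> E2"] E1m E2m by auto
  also have "\<dots> \<le> measure P A" by (rule P.finite_measure_mono[OF sub Am])
  finally show ?thesis unfolding A_def P_def .
qed


end
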